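(* Let $p$ be an odd prime, $n\ge1$, $K(n)_*=\mathbb{F}_p[v_n,v_n^{-1}]$ with $\deg v_n=-2(p^n-1)$, and let $R_*$ be a graded-commutative $K(n)_*$-algebra. Consider the graded $R_*$-algebras $R_*[x]/(x^{p^n})\otimes E(\epsilon)$ and $R_*[x_1,x_2]/(x_1,x_2)^{p^n}\otimes E(\epsilon_1,\epsilon_2)$ with $\deg\epsilon,\deg\epsilon_i=1$, $\deg x,\deg x_i=2$ ($E$ denoting exterior algebras). Let $\operatorname{Aut}_{G_a}(R_* )$ be the set of quasi-strict automorphisms of the 2-dimensional additive formal group law chunk $G_a=(\epsilon_1+\epsilon_2,\,x_1+x_2)$, i.e. pairs $f=(f(1)(\epsilon,x),f(2)(\epsilon,x))$ of elements of $R_*[x]/(x^{p^n})\otimes E(\epsilon)$ which are homogeneous of degrees $1$ and $2$ respectively, have zero constant terms, satisfy $$f(j)(\epsilon_1+\epsilon_2,x_1+x_2)=f(j)(\epsilon_1,x_1)+f(j)(\epsilon_2,x_2)\quad(j=1,2),$$ and satisfy $f(1)\equiv\epsilon+a_0x$, $f(2)\equiv x \bmod (x)^2$ for some $a_0\in R_1$; the product is $f\cdot g=g\circ f=(g(1)(f(1),f(2)),g(2)(f(1),f(2)))$. Let $$B_*=K(n)_*[\xi_1,\dots,\xi_{n-1}]\otimes E(\tau_0,\dots,\tau_{n-1}),\qquad \deg\tau_i=-(2p^i-1),\ \deg\xi_i=-2(p^i-1),$$ be the Hopf algebra with coproduct $\tau_k\mapsto\tau_k\otimes1+\sum_{i=0}^k\xi_{k-i}^{p^i}\otimes\tau_i$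 and $\xi_k\mapsto\sum_{i=0}^k\xi_{k-i}^{p^i}\otimes\xi_i$ (with $\xi_0=1$). Then $B_*$ corepresents the group-valued functor $\operatorname{Aut}_{G_a}(-)$: the assignment $$\theta\longmapsto\Big(\epsilon+\sum_{i=0}^{n-1}\theta(\tau_i)x^{p^i},\ x+\sum_{i=1}^{n-1}\theta(\xi_i)x^{p^i}\Big)$$ is a natural isomorphism $\operatorname{Hom}_{K(n)_*\text{-alg}}(B_*,-)\cong\operatorname{Aut}_{G_a}(-)$ of group-valued functors.
   Context: Grading conventions: an element of $R_m$ has degree $-m$; total degree counts $\deg x=2$, $\deg\epsilon=1$. The group structure on $\operatorname{Hom}_{K(n)_*\text{-alg}}(B_*,R_* )$ is the convolution induced by the coproduct of $B_*$. *)

theory Defs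
  imports "HOL-Computational_Algebra.Primes"
begin

text \<open>A graded ring R_* is modelled by a ring type 'r together with the family
  of homogeneous pieces G m = R_m (m :: int); an element of R_m has degree -m.
  R is the internal direct sum of the R_m.\<close>

definition graded_ring :: "(int \<Rightarrow> 'r::ring_1 set) \<Rightarrow> bool" where
  "graded_ring G \<longleftrightarrow>
     (\<forall>m. 0 \<in> G m \<and> (\<forall>a\<in>G m. \<forall>b\<in>G m. a + b \<in> G m \<and> - a \<in> G m)) \<and>
     (\<forall>m k. \<forall>a\<in>G m. \<forall>b\<in>G k. a * b \<in> G (m + k)) \<and>
     1 \<in> G 0 \<and>
     (\<forall>r. \<exists>M c. finite M \<and> (\<forall>m\<in>M. c m \<in> G m) \<and> r = (\<Sum>m\<in>M. c m)) \<and>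
     (\<forall>M c. finite M \<and> (\<forall>m\<in>M. c m \<in> G m) \<and> (\<Sum>m\<in>M. c m) = 0 \<longrightarrow> (\<forall>m\<in>M. c m = 0))"

definition graded_comm :: "(int \<Rightarrow> 'r::ring_1 set) \<Rightarrow> bool" where
  "graded_comm G \<longleftrightarrow>
     (\<forall>m k. \<forall>a\<in>G m. \<forall>b\<in>G k. a * b = (if even (m * k) then b * a else - (b * a)))"

text \<open>A graded-commutative K(n)_*-algebra, K(n)_* = F_p[v_n, v_n^{-1}],
  deg v_n = -2(p^n-1): characteristic p, plus the image v of v_n, a unit in
  R_{2(p^n-1)}.\<close>

definition gc_Kn_alg :: "nat \<Rightarrow> nat \<Rightarrow> (int \<Rightarrow> 'r::ring_1 set) \<Rightarrow> 'r \<Rightarrow> bool" where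
  "gc_Kn_alg p n G v \<longleftrightarrow> graded_ring G \<and> graded_comm G \<and> of_nat p = (0::'r) \<and>
     v \<in> G (2 * (int p ^ n - 1)) \<and>
     (\<exists>w \<in> G (- 2 * (int p ^ n - 1)). v * w = 1 \<and> w * v = 1)"

definition Kn_alg_hom :: "(int \<Rightarrow> 'r::ring_1 set) \<Rightarrow> 'r \<Rightarrow> (int \<Rightarrow> 's::ring_1 set) \<Rightarrow> 's
     \<Rightarrow> ('r \<Rightarrow> 's) \<Rightarrow> bool" where
  "Kn_alg_hom G v G' v' \<phi> \<longleftrightarrow>
     (\<forall>a b. \<phi> (a + b) = \<phi> a + \<phi> b) \<and> (\<forall>a b. \<phi> (a * b) = \<phi> a * \<phi> b) \<and>
     \<phi> 1 = 1 \<and> (\<forall>m. \<forall>a\<in>G m. \<phi> a \<in> G' m) \<and> \<phi> v = v'"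

text \<open>An element  \<Sum>_k a_k x^k + \<Sum>_k b_k x^k \<epsilon>  (coefficients on the left)
  is represented by the pair (a, b); a_k = b_k = 0 for k \<ge> N.\<close>

type_synonym 'r A1 = "(nat \<Rightarrow> 'r) \<times> (nat \<Rightarrow> 'r)"

definition A1_elem :: "nat \<Rightarrow> 'r::ring_1 A1 \<Rightarrow> bool" where
  "A1_elem N F \<longleftrightarrow> (\<forall>k\<ge>N. fst F k = 0 \<and> snd F k = 0)"

text \<open>Homogeneity of total degree d (deg x = 2, deg \<epsilon> = 1, R_m in degree -m).\<close>

definition A1_homog :: "(int \<Rightarrow> 'r::ring_1 set) \<Rightarrow> int \<Rightarrow> 'r A1 \<Rightarrow> bool" where
  "A1_homog G d F \<longleftrightarrow> (\<forall>k. fst F k \<in> G (2 * int k - d) \<and> snd F k \<in> G (2 * int k + 1 - d))"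

text \<open>Product F * H of homogeneous elements, where odd2 is the parity of the
  degree of H.  Graded commutativity gives \<epsilon> c = (-1)^{|c|} c \<epsilon> for
  homogeneous c, and |c| \<equiv> deg H for every x^k-coefficient c of H; \<epsilon>^2 = 0.\<close>

definition A1_mul :: "nat \<Rightarrow> bool \<Rightarrow> 'r::ring_1 A1 \<Rightarrow> 'r A1 \<Rightarrow> 'r A1" where
  "A1_mul N odd2 F H =
     ((\<lambda>k. if k < N then (\<Sum>i\<le>k. fst F i * fst H (k - i)) else 0),
      (\<lambda>k. if k < N then (\<Sum>i\<le>k. fst F i * snd H (k - i)
                     + (if odd2 then - 1 else 1) * (snd F i * fst H (k - i))) else 0))"

definition A1_one :: "'r::ring_1 A1" where
  "A1_one = ((\<lambda>k. if k = 0 then 1 else 0), (\<lambda>k. 0))"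

definition A1_pow :: "nat \<Rightarrow> 'r::ring_1 A1 \<Rightarrow> nat \<Rightarrow> 'r A1" where
  "A1_pow N F k = ((A1_mul N False F) ^^ k) A1_one"

text \<open>Substitution H(F1, F2) of \<epsilon> := F1 (odd degree) and x := F2 (even degree)
  into H = \<Sum> c_k x^k + \<Sum> e_k x^k \<epsilon>, i.e.  \<Sum> c_k F2^k + \<Sum> e_k F2^k F1.\<close>

definition A1_subst :: "nat \<Rightarrow> 'r::ring_1 A1 \<Rightarrow> 'r A1 \<Rightarrow> 'r A1 \<Rightarrow> 'r A1" where
  "A1_subst N H F1 F2 =
     ((\<lambda>m. \<Sum>k<N. fst H k * fst (A1_pow N F2 k) m
                  + snd H k * fst (A1_mul N True (A1_pow N F2 k) F1) m),
      (\<lambda>m. \<Sum>k<N. fst H k * snd (A1_pow N F2 k) m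
                  + snd H k * snd (A1_mul N True (A1_pow N F2 k) F1) m))"

definition A1_cong_x2 :: "'r::ring_1 A1 \<Rightarrow> 'r A1 \<Rightarrow> bool" where
  "A1_cong_x2 F H \<longleftrightarrow> (\<forall>k<2. fst F k = fst H k \<and> snd F k = snd H k)"

text \<open>An element is represented by its coefficient function
  (i, j, s, t) \<mapsto> coefficient of x1^i x2^j \<epsilon>1^s \<epsilon>2^t (coefficients on the left,
  \<epsilon>1 before \<epsilon>2), zero unless i + j < N.\<close>

type_synonym 'r A2 = "nat \<Rightarrow> nat \<Rightarrow> bool \<Rightarrow> bool \<Rightarrow> 'r"

text \<open>F(\<epsilon>1+\<epsilon>2, x1+x2) = \<Sum> a_k (x1+x2)^k + \<Sum> b_k (x1+x2)^k (\<epsilon>1+\<epsilon>2),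
  expanded with the binomial theorem.\<close>

definition A2_subst_sum :: "nat \<Rightarrow> 'r::ring_1 A1 \<Rightarrow> 'r A2" where
  "A2_subst_sum N F = (\<lambda>i j s t.
     if i + j < N then
       (if \<not> s \<and> \<not> t then of_nat ((i + j) choose i) * fst F (i + j)
        else if s \<and> \<not> t then of_nat ((i + j) choose i) * snd F (i + j)
        else if \<not> s \<and> t then of_nat ((i + j) choose i) * snd F (i + j)
        else 0)
     else 0)"

definition A2_sep_sum :: "nat \<Rightarrow> 'r::ring_1 A1 \<Rightarrow> 'r A2" where
  "A2_sep_sum N F = (\<lambda>i j s t.
     if i + j < N then
       (if \<not> s \<and> \<not> t then (if j = 0 then fst F i else 0) + (if i = 0 then fst F j else 0)
        else if s \<and> \<not> t then (if j = 0 then snd F i else 0)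
        else if \<not> s \<and> t then (if i = 0 then snd F j else 0)
        else 0)
     else 0)"

definition A1_additive :: "nat \<Rightarrow> 'r::ring_1 A1 \<Rightarrow> bool" where
  "A1_additive N F \<longleftrightarrow> A2_subst_sum N F = A2_sep_sum N F"

definition AutGa :: "nat \<Rightarrow> nat \<Rightarrow> (int \<Rightarrow> 'r::ring_1 set) \<Rightarrow> ('r A1 \<times> 'r A1) set" where
  "AutGa p n G = {f. A1_elem (p ^ n) (fst f) \<and> A1_elem (p ^ n) (snd f) \<and>
      A1_homog G 1 (fst f) \<and> A1_homog G 2 (snd f) \<and>
      fst (fst f) 0 = 0 \<and> fst (snd f) 0 = 0 \<and>
      A1_additive (p ^ n) (fst f) \<and> A1_additive (p ^ n) (snd f) \<and>
      (\<exists>a0 \<in> G 1. A1_cong_x2 (fst f) ((\<lambda>k. if k = 1 then a0 else 0), (\<lambda>k. if k = 0 then 1 else 0))) \<and>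
      A1_cong_x2 (snd f) ((\<lambda>k. if k = 1 then 1 else 0), (\<lambda>k. 0))}"

definition aut_mult :: "nat \<Rightarrow> 'r::ring_1 A1 \<times> 'r A1 \<Rightarrow> 'r A1 \<times> 'r A1 \<Rightarrow> 'r A1 \<times> 'r A1" where
  "aut_mult N f g = (A1_subst N (fst g) (fst f) (snd f), A1_subst N (snd g) (fst f) (snd f))"

definition aut_map :: "('r \<Rightarrow> 's) \<Rightarrow> 'r A1 \<times> 'r A1 \<Rightarrow> 's A1 \<times> 's A1" where
  "aut_map \<phi> f = ((\<phi> \<circ> fst (fst f), \<phi> \<circ> snd (fst f)), (\<phi> \<circ> fst (snd f), \<phi> \<circ> snd (snd f)))"

text \<open>B_* = K(n)_*[\<xi>_1..\<xi>_{n-1}] \<otimes> E(\<tau>_0..\<tau>_{n-1}) is the free graded-commutative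
  K(n)_*-algebra on even generators \<xi>_i and odd generators \<tau>_i (p odd), so a
  K(n)_*-algebra map \<theta> : B_* \<rightarrow> R_* is the same as its values on generators:
  \<theta> is represented by (t, s) with t i = \<theta>(\<tau>_i) \<in> R_{2p^i-1} (i < n) and
  s i = \<theta>(\<xi>_i) \<in> R_{2(p^i-1)} (1 \<le> i < n); by convention s 0 = \<theta>(\<xi>_0) = 1 and
  all other values are 0.\<close>

definition HomB :: "nat \<Rightarrow> nat \<Rightarrow> (int \<Rightarrow> 'r::ring_1 set) \<Rightarrow> ((nat \<Rightarrow> 'r) \<times> (nat \<Rightarrow> 'r)) set" where
  "HomB p n G = {\<theta>. (\<forall>i<n. fst \<theta> i \<in> G (2 * int p ^ i - 1)) \<and> (\<forall>i\<ge>n. fst \<theta> i = 0) \<and>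
      snd \<theta> 0 = 1 \<and> (\<forall>i. 1 \<le> i \<and> i < n \<longrightarrow> snd \<theta> i \<in> G (2 * (int p ^ i - 1))) \<and>
      (\<forall>i\<ge>n. snd \<theta> i = 0)}"

text \<open>Convolution product \<theta> * \<theta>' = \<mu> \<circ> (\<theta> \<otimes> \<theta>') \<circ> \<Delta>, evaluated on generators via
  \<Delta>\<tau>_k = \<tau>_k \<otimes> 1 + \<Sum>_i \<xi>_{k-i}^{p^i} \<otimes> \<tau>_i,  \<Delta>\<xi>_k = \<Sum>_i \<xi>_{k-i}^{p^i} \<otimes> \<xi>_i.\<close>

definition conv :: "nat \<Rightarrow> nat \<Rightarrow> (nat \<Rightarrow> 'r::ring_1) \<times> (nat \<Rightarrow> 'r) \<Rightarrow> (nat \<Rightarrow> 'r) \<times> (nat \<Rightarrow> 'r)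
     \<Rightarrow> (nat \<Rightarrow> 'r) \<times> (nat \<Rightarrow> 'r)" where
  "conv p n \<theta> \<theta>' =
     ((\<lambda>k. if k < n then fst \<theta> k + (\<Sum>i\<le>k. snd \<theta> (k - i) ^ (p ^ i) * fst \<theta>' i) else 0),
      (\<lambda>k. if k < n then (\<Sum>i\<le>k. snd \<theta> (k - i) ^ (p ^ i) * snd \<theta>' i) else 0))"

definition hom_map :: "('r \<Rightarrow> 's) \<Rightarrow> (nat \<Rightarrow> 'r) \<times> (nat \<Rightarrow> 'r) \<Rightarrow> (nat \<Rightarrow> 's) \<times> (nat \<Rightarrow> 's)" where
  "hom_map \<phi> \<theta> = (\<phi> \<circ> fst \<theta>, \<phi> \<circ> snd \<theta>)"

definition Phi :: "nat \<Rightarrow> nat \<Rightarrow> (nat \<Rightarrow> 'r::ring_1) \<times> (nat \<Rightarrow> 'r) \<Rightarrow> 'r A1 \<times> 'r A1" where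
  "Phi p n \<theta> =
     (((\<lambda>k. \<Sum>i<n. if k = p ^ i then fst \<theta> i else 0), (\<lambda>k. if k = 0 then 1 else 0)),
      ((\<lambda>k. (if k = 1 then 1 else 0) + (\<Sum>i\<in>{1..<n}. if k = p ^ i then snd \<theta> i else 0)),
       (\<lambda>k. 0)))"

end

theory Submission imports Defs "HOL-Computational_Algebra.Formal_Power_Series"
begin

lemma binomial_commuting:
  fixes a b :: "'a::semiring_1"
  assumes ab: "a * b = b * a"
  shows "(a + b)^n = (\<Sum>k\<le>n. of_nat (n choose k) * a^k * b^(n-k))"
proof (induct n)
  case 0
  then show ?case by simp
next
  case (Suc n)
  have decomp: "{0..n+1} = {0} \<union> {n + 1} \<union> {1..n}" and decomp2: "{0..n} = {0} \<union> {1..n}"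
    by auto
  have A: "a * (of_nat c * a^k * b^j) = of_nat c * a^(k+1) * b^j" for c k j
  proof -
    have "a * (of_nat c * a^k * b^j) = (a * of_nat c) * a^k * b^j" by (simp only: mult.assoc)
    also have "a * of_nat c = of_nat c * a" by (rule mult_of_nat_commute[symmetric])
    finally show ?thesis by (simp only: mult.assoc power_Suc add.commute[of k 1] plus_1_eq_Suc)
  qed
  have B: "b * (of_nat c * a^k * b^j) = of_nat c * a^k * b^(j+1)" for c k j
  proof -
    have "b * (of_nat c * a^k * b^j) = of_nat c * (b * a^k) * b^j"
    proof -
      have "b * (of_nat c * a^k * b^j) = (b * of_nat c) * a^k * b^j" by (simp only: mult.assoc)
      also have "b * of_nat c = of_nat c * b" by (rule mult_of_nat_commute[symmetric])
      finally show ?thesis by (simp only: mult.assoc)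
    qed
    also have "b * a^k = a^k * b" using power_commuting_commutes[OF ab] by simp
    finally show ?thesis by (simp only: mult.assoc power_Suc add.commute[of j 1] plus_1_eq_Suc)
  qed
  have "(a + b)^(n+1) = (a + b) * (\<Sum>k\<le>n. of_nat (n choose k) * a^k * b^(n - k))"
    using Suc.hyps by simp
  also have "\<dots> = a * (\<Sum>k\<le>n. of_nat (n choose k) * a^k * b^(n-k)) +
      b * (\<Sum>k\<le>n. of_nat (n choose k) * a^k * b^(n-k))"
    by (rule distrib_right)
  also have "\<dots> = (\<Sum>k\<le>n. of_nat (n choose k) * a^(k+1) * b^(n-k)) +
      (\<Sum>k\<le>n. of_nat (n choose k) * a^k * b^(n - k + 1))"
    by (simp add: sum_distrib_left A B)
  also have "\<dots> = (\<Sum>k\<le>n. of_nat (n choose k) * a^k * b^(n + 1 - k)) +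
      (\<Sum>k=1..n+1. of_nat (n choose (k - 1)) * a^k * b^(n + 1 - k))"
    by (simp add: atMost_atLeast0 sum.shift_bounds_cl_Suc_ivl Suc_diff_le add.commute del: sum.cl_ivl_Suc)
  also have "\<dots> = b^(n + 1) +
      (\<Sum>k=1..n. of_nat (n choose k) * a^k * b^(n + 1 - k)) + (a^(n + 1) +
      (\<Sum>k=1..n. of_nat (n choose (k - 1)) * a^k * b^(n + 1 - k)))"
      using sum.nat_ivl_Suc' [of 1 n "\<lambda>k. of_nat (n choose (k-1)) * a ^ k * b ^ (n + 1 - k)"]
    by (simp add: sum.atLeast_Suc_atMost atMost_atLeast0)
  also have "\<dots> = a^(n + 1) + b^(n + 1) +
      (\<Sum>k=1..n. of_nat (n + 1 choose k) * a^k * b^(n + 1 - k))"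
    by (auto simp add: add_ac distrib_right sum.distrib [symmetric] choose_reduce_nat)
  also have "\<dots> = (\<Sum>k\<le>n+1. of_nat (n + 1 choose k) * a^k * b^(n + 1 - k))"
    using decomp by (simp add: atMost_atLeast0 add_ac)
  finally show ?case
    by simp
qed

lemma frob1:
  fixes a b :: "'a::ring_1"
  assumes ab: "a * b = b * a" and p: "prime p" and char: "of_nat p = (0::'a)"
  shows "(a + b)^p = a^p + b^p"
proof -
  have p0: "p > 0" using p prime_gt_0_nat by blast
  have "(a + b)^p = (\<Sum>k\<le>p. of_nat (p choose k) * a^k * b^(p-k))"
    by (rule binomial_commuting[OF ab])
  also have "\<dots> = (\<Sum>k\<in>{0,p}. of_nat (p choose k) * a^k * b^(p-k))"
  proof (intro sum.mono_neutral_right ballI)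
    fix k assume "k \<in> {..p} - {0, p}"
    hence k: "k > 0" "k < p" by auto
    have "p dvd (p choose k)"
      by (rule dvd_choose_prime) (use k p0 p in auto)
    then obtain q where "p choose k = p * q" by blast
    hence "of_nat (p choose k) = (0 :: 'a)" by (simp add: char)
    thus "of_nat (p choose k) * a ^ k * b ^ (p - k) = 0" by simp
  qed auto
  finally show ?thesis using p0 by (simp add: add.commute)
qed

lemma frob_pow:
  fixes a b :: "'a::ring_1"
  assumes ab: "a * b = b * a" and p: "prime p" and char: "of_nat p = (0::'a)"
  shows "(a + b)^(p^k) = a^(p^k) + b^(p^k)"
proof (induct k)
  case 0 then show ?case by simp
next
  case (Suc k)
  have c: "a^(p^k) * b^(p^k) = b^(p^k) * a^(p^k)"
    by (metis ab power_commuting_commutes)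
  have "(a + b)^(p^Suc k) = ((a+b)^(p^k))^p" by (simp only: power_Suc2 power_mult)
  also have "\<dots> = (a^(p^k))^p + (b^(p^k))^p" using Suc frob1[OF c p char] by simp
  finally show ?case by (simp only: power_Suc2 power_mult)
qed

lemma frob_sum:
  fixes f :: "'b \<Rightarrow> 'a::ring_1"
  assumes fin: "finite A" and comm: "\<And>i j. i \<in> A \<Longrightarrow> j \<in> A \<Longrightarrow> f i * f j = f j * f i"
    and p: "prime p" and char: "of_nat p = (0::'a)"
  shows "(sum f A)^(p^k) = (\<Sum>i\<in>A. f i ^ (p^k))"
  using fin comm
proof (induct A rule: finite_induct)
  case empty
  have "p^k > 0" using p prime_gt_0_nat by simp
  then show ?case by (simp add: power_0_left)
next
  case (insert x F)
  have c: "f x * sum f F = sum f F * f x"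
    using insert.prems by (simp add: sum_distrib_left sum_distrib_right)
  have "(sum f (insert x F))^(p^k) = (f x + sum f F)^(p^k)" using insert by simp
  also have "\<dots> = f x ^(p^k) + (sum f F)^(p^k)" by (rule frob_pow[OF c p char])
  also have "(sum f F)^(p^k) = (\<Sum>i\<in>F. f i ^ (p^k))" using insert by auto
  finally show ?case using insert by simp
qed

definition fmon :: "'a::ring_1 \<Rightarrow> nat \<Rightarrow> 'a fps" where
  "fmon c e = fps_const c * fps_X ^ e"

lemma fmon_nth: "fps_nth (fmon c e) m = (if m = e then c else 0)"
  by (simp add: fmon_def)

lemma fmon_mult: "fmon c e * fmon d f = fmon (c * d) (e + f)"
proof -
  have "fmon c e * fmon d f = fps_const c * (fps_X ^ e * fps_const d) * fps_X ^ f"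
    by (simp add: fmon_def mult.assoc)
  also have "fps_X ^ e * fps_const d = fps_const d * fps_X ^ e"
    by (rule fps_mult_fps_X_power_commute)
  also have "fps_const c * (fps_const d * fps_X ^ e) * fps_X ^ f = (fps_const c * fps_const d) * (fps_X ^ e * fps_X ^ f)"
    by (simp only: mult.assoc)
  finally show ?thesis by (simp only: fmon_def power_add fps_const_mult)
qed

lemma fmon_pow: "fmon c e ^ q = fmon (c ^ q) (e * q)"
proof (induct q)
  case 0 then show ?case by (simp add: fmon_def)
next
  case (Suc q)
  have "fmon c e ^ Suc q = fmon c e * fmon (c ^ q) (e * q)" using Suc by simp
  also have "\<dots> = fmon (c ^ Suc q) (e * Suc q)" by (simp add: fmon_mult)
  finally show ?case .
qed

lemma fmon_comm: "c * d = d * c \<Longrightarrow> fmon c e * fmon d f = fmon d f * fmon c e"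
  by (simp add: fmon_mult add.commute)

lemma fps_char: "of_nat p = (0::'a::ring_1) \<Longrightarrow> of_nat p = (0::'a fps)"
  by (metis fps_of_nat fps_const_0_eq_0)

lemma fps_binom_nth:
  "fps_nth ((fmon (1::'a::ring_1) e + 1) ^ k) (e * i) = (if e > 0 then of_nat (k choose i) else (of_nat (2^k)))"
proof -
  have c: "fmon (1::'a) e * 1 = 1 * fmon 1 e" by simp
  have "((fmon (1::'a) e + 1) ^ k) = (\<Sum>j\<le>k. of_nat (k choose j) * fmon 1 e ^ j * 1 ^ (k - j))"
    by (rule binomial_commuting[OF c])
  also have "\<dots> = (\<Sum>j\<le>k. of_nat (k choose j) * fmon 1 (e * j))" by (simp add: fmon_pow)
  finally have eq: "((fmon (1::'a) e + 1) ^ k) = (\<Sum>j\<le>k. of_nat (k choose j) * fmon 1 (e * j))" .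
  show ?thesis
  proof (cases "e > 0")
    case True
    have "fps_nth ((fmon (1::'a) e + 1) ^ k) (e * i) = (\<Sum>j\<le>k. if j = i then of_nat (k choose j) else 0)"
      unfolding eq fps_sum_nth using True by (intro sum.cong) (auto simp: fmon_nth)
    also have "\<dots> = of_nat (k choose i)" by (simp add: binomial_eq_0)
    finally show ?thesis using True by simp
  next
    case False
    hence "fps_nth ((fmon (1::'a) e + 1) ^ k) (e * i) = (\<Sum>j\<le>k. of_nat (k choose j))"
      unfolding eq fps_sum_nth by (simp add: fmon_nth)
    also have "\<dots> = of_nat (\<Sum>j\<le>k. k choose j)" by simp
    also have "\<dots> = of_nat (2^k)" by (simp add: choose_row_sum)
    finally show ?thesis using False by simp
  qed
qed

lemma choose_prime_power_zero:
  assumes p: "prime p" and char: "of_nat p = (0::'a::ring_1)" and i: "0 < i" "i < p^j"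
  shows "of_nat (p^j choose i) = (0::'a)"
proof -
  have c: "fmon (1::'a) 1 * 1 = 1 * fmon 1 1" by simp
  have "(fmon (1::'a) 1 + 1)^(p^j) = fmon 1 1 ^ (p^j) + 1 ^ (p^j)"
    by (rule frob_pow[OF c p fps_char[OF char]])
  also have "\<dots> = fmon 1 (p^j) + 1" by (simp add: fmon_pow)
  finally have "fps_nth ((fmon (1::'a) 1 + 1)^(p^j)) (1 * i) = fps_nth (fmon 1 (p^j) + 1) i" by simp
  thus ?thesis using i by (simp only: fps_binom_nth) (simp add: fmon_nth)
qed

lemma choose_key:
  assumes p: "prime p" and char: "of_nat p = (0::'a::ring_1)" and k: "k = p^e * m"
  shows "of_nat (k choose p^e) = (of_nat m :: 'a)"
proof -
  have c: "fmon (1::'a) 1 * 1 = 1 * fmon 1 1" by simp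
  have "(fmon (1::'a) 1 + 1)^k = ((fmon (1::'a) 1 + 1)^(p^e))^m" by (simp add: k power_mult)
  also have "(fmon (1::'a) 1 + 1)^(p^e) = fmon 1 1 ^ (p^e) + 1 ^ (p^e)"
    by (rule frob_pow[OF c p fps_char[OF char]])
  also have "\<dots> = fmon 1 (p^e) + 1" by (simp add: fmon_pow)
  finally have "fps_nth ((fmon (1::'a) 1 + 1)^k) (1 * p^e) = fps_nth ((fmon 1 (p^e) + 1)^m) (p^e * 1)" by simp
  moreover have "p^e > 0" using p prime_gt_0_nat by simp
  ultimately show ?thesis by (simp only: fps_binom_nth) simp
qed

lemma unit_of_nat:
  fixes p m :: nat
  assumes p: "prime p" and char: "of_nat p = (0::'a::ring_1)" and m: "\<not> p dvd m"
  shows "\<exists>u. of_nat u * (of_nat m :: 'a) = 1"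
proof -
  have m0: "m \<noteq> 0" using m by (metis dvd_0_right)
  have g: "gcd m p = 1"
  proof -
    have "coprime p m" using m p by (simp add: prime_imp_coprime)
    thus ?thesis by (simp add: coprime_commute)
  qed
  obtain x y where "m * x = p * y + gcd m p" using bezout_nat[OF m0] by blast
  hence "m * x = p * y + 1" using g by simp
  hence "(of_nat (m * x) :: 'a) = of_nat (p * y + 1)" by simp
  hence "of_nat m * of_nat x = (1::'a)" by (simp add: char)
  hence "of_nat x * of_nat m = (1::'a)" by (metis mult_of_nat_commute)
  thus ?thesis by blast
qed

lemma decompose_p:
  fixes p k :: nat
  assumes p: "prime p" and k: "k > 0"
  shows "\<exists>e m. k = p^e * m \<and> \<not> p dvd m"
  using k
proof (induct k rule: less_induct)
  case (less k)
  show ?case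
  proof (cases "p dvd k")
    case True
    then obtain k' where k': "k = p * k'" by blast
    have p1: "p > 1" using p prime_gt_1_nat by blast
    have "k' > 0" using less.prems k' by auto
    moreover have "k' < k" using k' p1 \<open>k' > 0\<close> by simp
    ultimately obtain e m where "k' = p^e * m" "\<not> p dvd m" using less.hyps by blast
    hence "k = p^(Suc e) * m" "\<not> p dvd m" using k' by auto
    thus ?thesis by blast
  next
    case False
    hence "k = p^0 * k" by simp
    thus ?thesis using False by blast
  qed
qed

lemma nonpower_choose:
  fixes p k :: nat
  assumes p: "prime p" and char: "of_nat p = (0::'a::ring_1)" and k: "k \<ge> 2"
    and np: "\<forall>j. k \<noteq> p^j"
  shows "\<exists>i u. 0 < i \<and> i < k \<and> of_nat u * (of_nat (k choose i) :: 'a) = 1"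
proof -
  have "k > 0" using k by simp
  then obtain e m where em: "k = p^e * m" "\<not> p dvd m" using decompose_p[OF p] by blast
  have "m \<noteq> 1"
  proof
    assume "m = 1" hence "k = p^e" using em by simp
    thus False using np by blast
  qed
  moreover have "m \<noteq> 0" using em(2) by (metis dvd_0_right)
  ultimately have m2: "m \<ge> 2" by simp
  have pe: "p^e > 0" using p prime_gt_0_nat by simp
  have "p^e * 1 < p^e * m" using m2 pe by (intro mult_strict_left_mono) auto
  hence lt: "p^e < k" using em by simp
  obtain u where u: "of_nat u * (of_nat m :: 'a) = 1" using unit_of_nat[OF p char em(2)] by blast
  have "of_nat (k choose p^e) = (of_nat m :: 'a)" by (rule choose_key[OF p char em(1)])
  hence "of_nat u * (of_nat (k choose p^e) :: 'a) = 1" using u by simp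
  thus ?thesis using lt pe by blast
qed

definition sp :: "nat \<Rightarrow> nat \<Rightarrow> (nat \<Rightarrow> 'a::ring_1) \<Rightarrow> nat \<Rightarrow> 'a" where
  "sp p n c m = (\<Sum>i<n. if m = p^i then c i else 0)"

lemma sp_at:
  assumes "p > 1" "K < n" shows "sp p n c (p^K) = c K"
proof -
  have "sp p n c (p^K) = (\<Sum>i<n. if i = K then c i else 0)"
    unfolding sp_def using assms by (intro sum.cong) auto
  also have "\<dots> = c K" using assms by simp
  finally show ?thesis .
qed

lemma sp_not:
  assumes "\<forall>K<n. m \<noteq> p^K" shows "sp p n c m = 0"
  unfolding sp_def using assms by (intro sum.neutral) auto

lemma sp_ge:
  assumes "p > 1" "m \<ge> p^n" shows "sp p n c m = 0"
proof (rule sp_not, intro allI impI)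
  fix K assume "K < n"
  hence "p^K < p^n" using assms by (simp add: power_strict_increasing_iff)
  thus "m \<noteq> p^K" using assms by linarith
qed

lemma sp_0: "p > 0 \<Longrightarrow> sp p n c 0 = 0"
  by (rule sp_not) auto

lemma sp_cases:
  assumes "p > 1"
  obtains K where "K < n" "m = p^K" "sp p n c m = c K"
  | "\<forall>K<n. m \<noteq> p^K" "sp p n c m = 0"
proof (cases "\<exists>K<n. m = p^K")
  case True
  then obtain K where "K < n" "m = p^K" by blast
  thus ?thesis using that(1) sp_at[OF assms] by blast
next
  case False
  thus ?thesis using that(2) sp_not by blast
qed

lemma Phi_alt:
  assumes "n \<ge> 1" "snd \<theta> 0 = 1"
  shows "Phi p n \<theta> = ((sp p n (fst \<theta>), \<lambda>k. if k = 0 then 1 else 0), (sp p n (snd \<theta>), \<lambda>k. 0))"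
proof -
  have "{..<n} = insert 0 {1..<n}" using assms by auto
  hence "sp p n (snd \<theta>) k = (if k = 1 then 1 else 0) + (\<Sum>i\<in>{1..<n}. if k = p ^ i then snd \<theta> i else 0)" for k
    unfolding sp_def using assms by simp
  thus ?thesis unfolding Phi_def sp_def by simp
qed

lemma A1_pow_Suc: "A1_pow N F (Suc k) = A1_mul N False F (A1_pow N F k)"
  by (simp add: A1_pow_def)

lemma A1_pow_fst:
  assumes N: "N > 0"
  shows "fst (A1_pow N F k) m = (if m < N then fps_nth (Abs_fps (fst F) ^ k) m else 0)"
proof (induct k arbitrary: m)
  case 0
  show ?case using N by (simp add: A1_pow_def A1_one_def)
next
  case (Suc k)
  show ?case
  proof (cases "m < N")
    case True
    have "fst (A1_pow N F (Suc k)) m = (\<Sum>i\<le>m. fst F i * fst (A1_pow N F k) (m - i))"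
      using True by (simp add: A1_pow_Suc A1_mul_def)
    also have "\<dots> = (\<Sum>i\<le>m. fst F i * fps_nth (Abs_fps (fst F) ^ k) (m - i))"
      using True Suc by (intro sum.cong) auto
    also have "\<dots> = fps_nth (Abs_fps (fst F) ^ Suc k) m"
      by (simp add: fps_mult_nth atMost_atLeast0)
    finally show ?thesis using True by simp
  next
    case False
    thus ?thesis by (simp add: A1_pow_Suc A1_mul_def)
  qed
qed

lemma A1_pow_snd:
  assumes "snd F = (\<lambda>_. 0)"
  shows "snd (A1_pow N F k) = (\<lambda>_. 0)"
proof (induct k)
  case 0 show ?case by (simp add: A1_pow_def A1_one_def)
next
  case (Suc k)
  show ?case using Suc assms by (simp add: A1_pow_Suc A1_mul_def fun_eq_iff)
qed

lemma A1_mul_one: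
  assumes "A1_elem N H"
  shows "A1_mul N b A1_one H = H"
proof -
  have "fst (A1_mul N b A1_one H) m = fst H m" for m
  proof (cases "m < N")
    case True
    have "fst (A1_mul N b A1_one H) m = (\<Sum>i\<le>m. (if i = 0 then 1 else 0) * fst H (m - i))"
      using True unfolding A1_mul_def A1_one_def by simp
    also have "\<dots> = (\<Sum>i\<le>m. if i = 0 then fst H (m - i) else 0)"
      by (intro sum.cong) auto
    also have "\<dots> = fst H m" by (simp add: sum.delta)
    finally show ?thesis .
  next
    case False thus ?thesis using assms by (simp add: A1_mul_def A1_elem_def)
  qed
  moreover have "snd (A1_mul N b A1_one H) m = snd H m" for m
  proof (cases "m < N")
    case True
    have "snd (A1_mul N b A1_one H) m = (\<Sum>i\<le>m. (if i = 0 then 1 else 0) * snd H (m - i))"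
      using True unfolding A1_mul_def A1_one_def by simp
    also have "\<dots> = (\<Sum>i\<le>m. if i = 0 then snd H (m - i) else 0)"
      by (intro sum.cong) auto
    also have "\<dots> = snd H m" by (simp add: sum.delta)
    finally show ?thesis .
  next
    case False thus ?thesis using assms by (simp add: A1_mul_def A1_elem_def)
  qed
  ultimately show ?thesis by (simp add: prod_eq_iff fun_eq_iff)
qed

lemma even_comm:
  assumes "graded_comm G" "a \<in> G (2 * x)" "b \<in> G y"
  shows "a * b = b * a"
  using assms unfolding graded_comm_def by (metis even_mult_iff even_two_times_div_two dvd_triv_left)

lemma homB_snd:
  assumes "graded_ring G" "\<theta> \<in> HomB p n G" "j < n"
  shows "snd \<theta> j \<in> G (2 * (int p ^ j - 1))"
proof (cases "j = 0")
  case True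
  thus ?thesis using assms unfolding HomB_def graded_ring_def by simp
next
  case False
  thus ?thesis using assms unfolding HomB_def by simp
qed

lemma homB_comm:
  assumes "graded_ring G" "graded_comm G" "\<theta> \<in> HomB p n G" "b \<in> G y"
  shows "snd \<theta> j * b = b * snd \<theta> j"
proof (cases "j < n")
  case True
  show ?thesis by (rule even_comm[OF assms(2) homB_snd[OF assms(1,3) True] assms(4)])
next
  case False
  thus ?thesis using assms(3) unfolding HomB_def by simp
qed

lemma homB_comm_pow:
  assumes "graded_ring G" "graded_comm G" "\<theta> \<in> HomB p n G" "b \<in> G y"
  shows "snd \<theta> j ^ q * b = b * snd \<theta> j ^ q"
  by (rule power_commuting_commutes[OF homB_comm[OF assms]])

lemma fps_sp:
  "Abs_fps (sp p n c) = (\<Sum>j<n. fmon (c j) (p^j))"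
  by (rule fps_ext) (simp add: fps_sum_nth fmon_nth sp_def)

lemma pow_coeff:
  assumes G: "graded_ring G" "graded_comm G" and th: "\<theta> \<in> HomB p n G"
    and p: "prime p" and char: "of_nat p = (0::'a::ring_1)"
    and Gt: "G = (G :: int \<Rightarrow> 'a set)"
  shows "fps_nth (Abs_fps (sp p n (snd \<theta>)) ^ (p^i)) m
           = (\<Sum>j<n. if m = p^(j+i) then snd \<theta> j ^ (p^i) else 0)"
proof -
  have c: "fmon (snd \<theta> j) (p^j) * fmon (snd \<theta> j') (p^j') = fmon (snd \<theta> j') (p^j') * fmon (snd \<theta> j) (p^j)"
    if "j \<in> {..<n}" "j' \<in> {..<n}" for j j'
  proof (rule fmon_comm)
    show "snd \<theta> j * snd \<theta> j' = snd \<theta> j' * snd \<theta> j"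
      using homB_comm[OF G th homB_snd[OF G(1) th, of j']] that by simp
  qed
  have "Abs_fps (sp p n (snd \<theta>)) ^ (p^i) = (\<Sum>j<n. fmon (snd \<theta> j) (p^j) ^ (p^i))"
    unfolding fps_sp by (rule frob_sum[OF _ c p fps_char[OF char]]) auto
  also have "\<dots> = (\<Sum>j<n. fmon (snd \<theta> j ^ p^i) (p^(j+i)))"
    by (simp add: fmon_pow power_add)
  finally show ?thesis by (simp add: fps_sum_nth fmon_nth)
qed

lemma sp_sum:
  assumes "p > (1::nat)"
  shows "(\<Sum>k<p^n. sp p n c k * X k) = (\<Sum>i<n. c i * X (p^i))"
proof -
  have "(\<Sum>k<p^n. sp p n c k * X k) = (\<Sum>k<p^n. \<Sum>i<n. if k = p^i then c i * X k else 0)"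
    unfolding sp_def sum_distrib_right by (intro sum.cong refl) auto
  also have "\<dots> = (\<Sum>i<n. \<Sum>k<p^n. if k = p^i then c i * X k else 0)"
    by (rule sum.swap)
  also have "\<dots> = (\<Sum>i<n. c i * X (p^i))"
  proof (intro sum.cong refl)
    fix i assume "i \<in> {..<n}"
    hence "p^i < p^n" using assms by (simp add: power_strict_increasing_iff)
    thus "(\<Sum>k<p^n. if k = p^i then c i * X k else 0) = c i * X (p^i)"
      by (simp add: sum.delta)
  qed
  finally show ?thesis .
qed

lemma delta_sum:
  fixes X :: "nat \<Rightarrow> 'a::ring_1"
  assumes "N > (0::nat)"
  shows "(\<Sum>k<N. (if k = 0 then 1 else 0) * X k) = X 0"
proof -
  have "(\<Sum>k<N. (if k = 0 then 1 else 0) * X k) = (\<Sum>k<N. if k = 0 then X k else 0)"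
    by (intro sum.cong) auto
  also have "\<dots> = X 0" using assms by (simp add: sum.delta)
  finally show ?thesis .
qed

lemma zero_sum_mult:
  "(\<Sum>k<N. (0::'a::ring_1) * X k) = 0" by simp

lemma P_at:
  assumes "p > (1::nat)" "K < n"
  shows "(\<Sum>j<n. if p^K = p^(j+i) then g j else 0) = (if i \<le> K then g (K - i) else 0)"
proof -
  have "(\<Sum>j<n. if p^K = p^(j+i) then g j else 0) = (\<Sum>j<n. if j = K - i \<and> i \<le> K then g j else 0)"
    using assms by (intro sum.cong refl) (auto simp: power_inject_exp)
  also have "\<dots> = (if i \<le> K then g (K - i) else 0)"
    using assms by (cases "i \<le> K") (auto simp: sum.delta)
  finally show ?thesis .
qed

lemma P_not:
  assumes "p > (1::nat)" "\<forall>K<n. m \<noteq> p^K" "m < p^n"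
  shows "(\<Sum>j<n. if m = p^(j+i) then g j else 0) = 0"
proof (intro sum.neutral ballI)
  fix j assume "j \<in> {..<n}"
  show "(if m = p^(j+i) then g j else 0) = 0"
  proof (cases "m = p^(j+i)")
    case True
    hence "p^(j+i) < p^n" using assms by simp
    hence "j + i < n" using assms by (simp add: power_strict_increasing_iff)
    thus ?thesis using assms True by auto
  qed simp
qed

lemma sum_restrict_le:
  assumes "K < (n::nat)"
  shows "(\<Sum>i<n. a i * (if i \<le> K then b i else 0)) = (\<Sum>i\<le>K. a i * (b i :: 'a::ring_1))"
proof -
  have "(\<Sum>i<n. a i * (if i \<le> K then b i else 0)) = (\<Sum>i<n. if i \<le> K then a i * b i else 0)"
    by (intro sum.cong) auto
  also have "\<dots> = sum (\<lambda>i. a i * b i) {i \<in> {..<n}. i \<le> K}"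
    by (rule sum.inter_filter[symmetric]) simp
  also have "{i \<in> {..<n}. i \<le> K} = {..K}" using assms by auto
  finally show ?thesis .
qed

lemma part2:
  fixes G :: "int \<Rightarrow> 'r::ring_1 set"
  assumes p: "prime p" and n: "n \<ge> 1" and gc: "gc_Kn_alg p n G v"
    and th: "\<theta> \<in> HomB p n G" and th': "\<theta>' \<in> HomB p n G"
  shows "Phi p n (conv p n \<theta> \<theta>') = aut_mult (p ^ n) (Phi p n \<theta>) (Phi p n \<theta>')"
proof -
  from gc have G: "graded_ring G" "graded_comm G" and char: "of_nat p = (0::'r)"
    by (auto simp: gc_Kn_alg_def)
  have p1: "p > 1" using p prime_gt_1_nat by blast
  define N where "N = p^n"
  have N0: "N > 0" using p1 by (simp add: N_def)
  define f1 where "f1 = (sp p n (fst \<theta>), \<lambda>k::nat. if k = 0 then (1::'r) else 0)"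
  define f2 where "f2 = (sp p n (snd \<theta>), \<lambda>k::nat. (0::'r))"
  define g1 where "g1 = (sp p n (fst \<theta>'), \<lambda>k::nat. if k = 0 then (1::'r) else 0)"
  define g2 where "g2 = (sp p n (snd \<theta>'), \<lambda>k::nat. (0::'r))"
  have s0: "snd \<theta> 0 = 1" "snd \<theta>' 0 = 1" using th th' by (auto simp: HomB_def)
  have conv0: "snd (conv p n \<theta> \<theta>') 0 = 1" using n s0 by (simp add: conv_def)
  have Ph: "Phi p n \<theta> = (f1, f2)" "Phi p n \<theta>' = (g1, g2)"
    using Phi_alt[OF n s0(1)] Phi_alt[OF n s0(2)] by (simp_all add: f1_def f2_def g1_def g2_def)
  have Phc: "Phi p n (conv p n \<theta> \<theta>') = ((sp p n (fst (conv p n \<theta> \<theta>')), \<lambda>k. if k = 0 then 1 else 0),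
       (sp p n (snd (conv p n \<theta> \<theta>')), \<lambda>k. 0))"
    by (rule Phi_alt[OF n conv0])
  have P: "fst (A1_pow N f2 (p^i)) m = (if m < N then (\<Sum>j<n. if m = p^(j+i) then snd \<theta> j ^ (p^i) else 0) else 0)" for i m
    using A1_pow_fst[OF N0, of f2] pow_coeff[OF G th p char] by (simp add: f2_def)
  have Ps: "snd (A1_pow N f2 k) = (\<lambda>_. 0)" for k by (rule A1_pow_snd) (simp add: f2_def)
  have e1: "A1_elem N f1"
    unfolding A1_elem_def f1_def using sp_ge[OF p1] N0 by (auto simp: N_def)
  have one: "A1_mul N True (A1_pow N f2 0) f1 = f1" using A1_mul_one[OF e1] by (simp add: A1_pow_def)
  have C2f: "fst (A1_subst N g2 f1 f2) m = (\<Sum>i<n. snd \<theta>' i * fst (A1_pow N f2 (p^i)) m)" for m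
  proof -
    have "fst (A1_subst N g2 f1 f2) m = (\<Sum>k<p^n. sp p n (snd \<theta>') k * fst (A1_pow N f2 k) m)"
      by (simp add: A1_subst_def g2_def N_def)
    also have "\<dots> = (\<Sum>i<n. snd \<theta>' i * fst (A1_pow N f2 (p^i)) m)"
      by (rule sp_sum[OF p1])
    finally show ?thesis .
  qed
  have C2s: "snd (A1_subst N g2 f1 f2) m = 0" for m
    by (simp add: A1_subst_def g2_def Ps)
  have C1f: "fst (A1_subst N g1 f1 f2) m = (\<Sum>i<n. fst \<theta>' i * fst (A1_pow N f2 (p^i)) m) + sp p n (fst \<theta>) m" for m
  proof -
    have "fst (A1_subst N g1 f1 f2) m = (\<Sum>k<p^n. sp p n (fst \<theta>') k * fst (A1_pow N f2 k) m)
        + (\<Sum>k<N. (if k = 0 then 1 else 0) * fst (A1_mul N True (A1_pow N f2 k) f1) m)"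
      by (simp add: A1_subst_def g1_def N_def sum.distrib)
    also have "(\<Sum>k<p^n. sp p n (fst \<theta>') k * fst (A1_pow N f2 k) m) = (\<Sum>i<n. fst \<theta>' i * fst (A1_pow N f2 (p^i)) m)"
      by (rule sp_sum[OF p1])
    also have "(\<Sum>k<N. (if k = 0 then 1 else 0) * fst (A1_mul N True (A1_pow N f2 k) f1) m) = fst (A1_mul N True (A1_pow N f2 0) f1) m"
      by (rule delta_sum[OF N0])
    also have "\<dots> = sp p n (fst \<theta>) m" by (simp only: one) (simp add: f1_def)
    finally show ?thesis .
  qed
  have C1s: "snd (A1_subst N g1 f1 f2) m = (if m = 0 then 1 else 0)" for m
  proof -
    have "snd (A1_subst N g1 f1 f2) m = (\<Sum>k<N. (if k = 0 then 1 else 0) * snd (A1_mul N True (A1_pow N f2 k) f1) m)"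
      by (simp add: A1_subst_def g1_def Ps)
    also have "\<dots> = snd (A1_mul N True (A1_pow N f2 0) f1) m"
      by (rule delta_sum[OF N0])
    also have "\<dots> = (if m = 0 then 1 else 0)" by (simp only: one) (simp add: f1_def)
    finally show ?thesis .
  qed
  have Pat: "fst (A1_pow N f2 (p^i)) (p^K) = (if i \<le> K then snd \<theta> (K - i) ^ (p^i) else 0)" if "K < n" for i K
  proof -
    have "p^K < N" using that p1 by (simp add: N_def power_strict_increasing_iff)
    thus ?thesis using P_at[OF p1 that, of i "\<lambda>j. snd \<theta> j ^ (p^i)"] P by simp
  qed
  have Pnot: "fst (A1_pow N f2 (p^i)) m = 0" if "\<forall>K<n. m \<noteq> p^K" for i m
    using P_not[OF p1 that, of i "\<lambda>j. snd \<theta> j ^ (p^i)"] P by (simp add: N_def)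
  have commt: "snd \<theta> j ^ q * fst \<theta>' i = fst \<theta>' i * snd \<theta> j ^ q" if "i < n" for i j q
    using homB_comm_pow[OF G th] th' that by (auto simp: HomB_def)
  have comms: "snd \<theta> j ^ q * snd \<theta>' i = snd \<theta>' i * snd \<theta> j ^ q" if "i < n" for i j q
    using homB_comm_pow[OF G th homB_snd[OF G(1) th' that]] .
  have E1: "sp p n (fst (conv p n \<theta> \<theta>')) m = (\<Sum>i<n. fst \<theta>' i * fst (A1_pow N f2 (p^i)) m) + sp p n (fst \<theta>) m" for m
  proof (cases rule: sp_cases[OF p1, of n m "fst (conv p n \<theta> \<theta>')"])
    case (1 K)
    have "(\<Sum>i<n. fst \<theta>' i * fst (A1_pow N f2 (p^i)) m) = (\<Sum>i\<le>K. fst \<theta>' i * snd \<theta> (K - i) ^ (p^i))"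
      using 1 Pat sum_restrict_le[OF 1(1)] by simp
    also have "\<dots> = (\<Sum>i\<le>K. snd \<theta> (K - i) ^ (p^i) * fst \<theta>' i)"
      using 1 commt by (intro sum.cong) auto
    finally show ?thesis using 1 sp_at[OF p1 1(1), of "fst \<theta>"] by (simp add: conv_def add.commute)
  next
    case 2
    thus ?thesis using Pnot sp_not by simp
  qed
  have E2: "sp p n (snd (conv p n \<theta> \<theta>')) m = (\<Sum>i<n. snd \<theta>' i * fst (A1_pow N f2 (p^i)) m)" for m
  proof (cases rule: sp_cases[OF p1, of n m "snd (conv p n \<theta> \<theta>')"])
    case (1 K)
    have "(\<Sum>i<n. snd \<theta>' i * fst (A1_pow N f2 (p^i)) m) = (\<Sum>i\<le>K. snd \<theta>' i * snd \<theta> (K - i) ^ (p^i))"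
      using 1 Pat sum_restrict_le[OF 1(1)] by simp
    also have "\<dots> = (\<Sum>i\<le>K. snd \<theta> (K - i) ^ (p^i) * snd \<theta>' i)"
      using 1 comms by (intro sum.cong) auto
    finally show ?thesis using 1 by (simp add: conv_def)
  next
    case 2
    thus ?thesis using Pnot by simp
  qed
  show ?thesis
    unfolding Phc Ph aut_mult_def N_def[symmetric]
    by (simp add: prod_eq_iff fun_eq_iff C1f C1s C2f C2s E1 E2)
qed

lemma additive_sp:
  fixes c :: "nat \<Rightarrow> 'a::ring_1"
  assumes p: "prime p" and char: "of_nat p = (0::'a)"
  shows "A1_additive (p^n) (sp p n c, \<lambda>k. if k = 0 then \<beta> else 0)"
proof -
  have p1: "p > 1" using p prime_gt_1_nat by blast
  have sp0: "sp p n c 0 = 0" using p1 by (simp add: sp_0)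
  have main: "of_nat ((i + j) choose i) * sp p n c (i + j) =
      (if j = 0 then sp p n c i else 0) + (if i = 0 then sp p n c j else 0)" for i j
  proof (cases "i = 0")
    case True
    show ?thesis
    proof (cases "j = 0")
      case True
      thus ?thesis using \<open>i = 0\<close> sp0 by simp
    next
      case False
      thus ?thesis using \<open>i = 0\<close> by simp
    qed
  next
    case i0: False
    show ?thesis
    proof (cases "j = 0")
      case True thus ?thesis using i0 by simp
    next
      case j0: False
      show ?thesis
      proof (cases rule: sp_cases[OF p1, of n "i + j" c])
        case (1 K)
        have "of_nat (p^K choose i) = (0::'a)"
          by (rule choose_prime_power_zero[OF p char]) (use 1 i0 j0 in auto)
        thus ?thesis using 1 i0 j0 by simp
      next
        case 2 thus ?thesis using i0 j0 by simp
      qed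
    qed
  qed
  show ?thesis
    unfolding A1_additive_def A2_subst_sum_def A2_sep_sum_def
    by (intro ext) (auto simp: main)
qed

lemma Phi_in:
  fixes G :: "int \<Rightarrow> 'r::ring_1 set"
  assumes p: "prime p" and n: "n \<ge> 1" and gc: "gc_Kn_alg p n G v"
    and th: "\<theta> \<in> HomB p n G"
  shows "Phi p n \<theta> \<in> AutGa p n G"
proof -
  from gc have G: "graded_ring G" "graded_comm G" and char: "of_nat p = (0::'r)"
    by (auto simp: gc_Kn_alg_def)
  have G0: "0 \<in> G m" for m using G(1) by (simp add: graded_ring_def)
  have G1: "1 \<in> G 0" using G(1) by (simp add: graded_ring_def)
  have p1: "p > 1" using p prime_gt_1_nat by blast
  have s0: "snd \<theta> 0 = 1" using th by (auto simp: HomB_def)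
  have Ph: "Phi p n \<theta> = ((sp p n (fst \<theta>), \<lambda>k. if k = 0 then 1 else 0), (sp p n (snd \<theta>), \<lambda>k. 0))"
    by (rule Phi_alt[OF n s0])
  have ht: "fst \<theta> i \<in> G (2 * int p ^ i - 1)" if "i < n" for i using th that by (simp add: HomB_def)
  have h1: "sp p n (fst \<theta>) k \<in> G (2 * int k - 1)" for k
  proof (cases rule: sp_cases[OF p1, of n k "fst \<theta>"])
    case (1 K) thus ?thesis using ht[of K] by simp
  qed (simp add: G0)
  have h2: "sp p n (snd \<theta>) k \<in> G (2 * int k - 2)" for k
  proof (cases rule: sp_cases[OF p1, of n k "snd \<theta>"])
    case (1 K) thus ?thesis using homB_snd[OF G(1) th 1(1)] by (simp add: algebra_simps)
  qed (simp add: G0)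
  have el: "A1_elem (p^n) (sp p n c, \<lambda>k. if k = 0 then \<beta> else 0)" for c and \<beta> :: 'r
    unfolding A1_elem_def using sp_ge[OF p1] p1 by auto
  have el2: "A1_elem (p^n) (sp p n c, \<lambda>k. 0 :: 'r)" for c
    unfolding A1_elem_def using sp_ge[OF p1] p1 by auto
  have ad2: "A1_additive (p^n) (sp p n (snd \<theta>), \<lambda>k. 0 :: 'r)"
    using additive_sp[OF p char, of n "snd \<theta>" 0] by (simp cong: if_cong)
  have t0: "fst \<theta> 0 \<in> G 1" using ht[of 0] n by simp
  have sp1: "sp p n c 1 = c 0" for c :: "nat \<Rightarrow> 'r" using sp_at[OF p1, of 0 n c] n by simp
  have cg1: "A1_cong_x2 (sp p n (fst \<theta>), \<lambda>k. if k = 0 then 1 else 0)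
      ((\<lambda>k. if k = 1 then fst \<theta> 0 else 0), (\<lambda>k. if k = 0 then 1 else 0))"
    unfolding A1_cong_x2_def using sp1 sp_0[of p n] p1 by (auto simp: less_2_cases_iff)
  have cg2: "A1_cong_x2 (sp p n (snd \<theta>), \<lambda>k. 0) ((\<lambda>k. if k = 1 then 1 else 0), (\<lambda>k. 0))"
    unfolding A1_cong_x2_def using sp1 sp_0[of p n] p1 s0 by (auto simp: less_2_cases_iff)
  show ?thesis
    unfolding Ph AutGa_def
    using el el2 h1 h2 G1 G0 additive_sp[OF p char] ad2 t0 cg1 cg2 sp_0[of p n] p1
    by (auto simp: A1_homog_def)
qed

lemma Phi_inj:
  fixes G :: "int \<Rightarrow> 'r::ring_1 set"
  assumes p: "prime p" and n: "n \<ge> 1"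
    and th: "\<theta> \<in> HomB p n G" and th': "\<theta>' \<in> HomB p n G"
    and eq: "Phi p n \<theta> = Phi p n \<theta>'"
  shows "\<theta> = \<theta>'"
proof -
  have p1: "p > 1" using p prime_gt_1_nat by blast
  have s0: "snd \<theta> 0 = 1" "snd \<theta>' 0 = 1" using th th' by (auto simp: HomB_def)
  have "sp p n (fst \<theta>) = sp p n (fst \<theta>')" "sp p n (snd \<theta>) = sp p n (snd \<theta>')"
    using eq Phi_alt[OF n s0(1)] Phi_alt[OF n s0(2)] by simp_all
  hence a: "sp p n (fst \<theta>) (p^i) = sp p n (fst \<theta>') (p^i)" "sp p n (snd \<theta>) (p^i) = sp p n (snd \<theta>') (p^i)" for i
    by simp_all
  have "fst \<theta> i = fst \<theta>' i" for i
  proof (cases "i < n")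
    case True thus ?thesis using a(1)[of i] sp_at[OF p1 True, of "fst \<theta>"] sp_at[OF p1 True, of "fst \<theta>'"] by simp
  next
    case False thus ?thesis using th th' by (simp add: HomB_def)
  qed
  moreover have "snd \<theta> i = snd \<theta>' i" for i
  proof (cases "i < n")
    case True thus ?thesis using a(2)[of i] sp_at[OF p1 True, of "snd \<theta>"] sp_at[OF p1 True, of "snd \<theta>'"] by simp
  next
    case False thus ?thesis using th th' by (simp add: HomB_def)
  qed
  ultimately show ?thesis by (simp add: prod_eq_iff fun_eq_iff)
qed

lemma additive_structure:
  fixes F :: "'a::ring_1 A1"
  assumes p: "prime p" and char: "of_nat p = (0::'a)" and add: "A1_additive (p^n) F"
    and el: "A1_elem (p^n) F" and z: "fst F 0 = 0"
  shows "fst F = sp p n (\<lambda>i. if i < n then fst F (p^i) else 0)"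
    and "\<And>k. k \<ge> 1 \<Longrightarrow> snd F k = 0"
proof -
  have p1: "p > 1" using p prime_gt_1_nat by blast
  have ad: "A2_subst_sum (p^n) F i j s t = A2_sep_sum (p^n) F i j s t" for i j s t
    using add unfolding A1_additive_def by simp
  show "fst F = sp p n (\<lambda>i. if i < n then fst F (p^i) else 0)"
  proof
    fix k
    show "fst F k = sp p n (\<lambda>i. if i < n then fst F (p^i) else 0) k"
    proof (cases rule: sp_cases[OF p1, of n k "\<lambda>i. if i < n then fst F (p^i) else 0"])
      case (1 K) thus ?thesis by simp
    next
      case 2
      have "fst F k = 0"
      proof (cases "k \<ge> p^n")
        case True thus ?thesis using el by (simp add: A1_elem_def)
      next
        case kN: False
        show ?thesis
        proof (cases "k = 0")
          case True thus ?thesis using z by simp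
        next
          case k0: False
          have np: "\<forall>j. k \<noteq> p^j"
          proof (intro allI notI)
            fix j assume kj: "k = p^j"
            hence "p^j < p^n" using kN by simp
            hence "j < n" using p1 by (simp add: power_strict_increasing_iff)
            thus False using 2 kj by blast
          qed
          have "k \<noteq> 1" using np by (metis power_0)
          hence k2: "k \<ge> 2" using k0 by simp
          obtain i u where iu: "0 < i" "i < k" "of_nat u * (of_nat (k choose i) :: 'a) = 1"
            using nonpower_choose[OF p char k2 np] by blast
          have "A2_subst_sum (p^n) F i (k - i) False False = A2_sep_sum (p^n) F i (k - i) False False"
            by (rule ad)
          hence "of_nat (k choose i) * fst F k = 0"
            using iu kN by (simp add: A2_subst_sum_def A2_sep_sum_def)
          hence "of_nat u * (of_nat (k choose i) * fst F k) = 0" by simp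
          thus ?thesis using iu(3) by (simp add: mult.assoc[symmetric])
        qed
      qed
      thus ?thesis using 2 by simp
    qed
  qed
  fix k :: nat assume k1: "k \<ge> 1"
  show "snd F k = 0"
  proof (cases "k \<ge> p^n")
    case True thus ?thesis using el by (simp add: A1_elem_def)
  next
    case False
    have "A2_subst_sum (p^n) F 0 k True False = A2_sep_sum (p^n) F 0 k True False"
      by (rule ad)
    thus ?thesis using False k1 by (simp add: A2_subst_sum_def A2_sep_sum_def)
  qed
qed

lemma Phi_surj:
  fixes G :: "int \<Rightarrow> 'r::ring_1 set"
  assumes p: "prime p" and n: "n \<ge> 1" and gc: "gc_Kn_alg p n G v"
    and f: "f \<in> AutGa p n G"
  shows "\<exists>\<theta>\<in>HomB p n G. f = Phi p n \<theta>"
proof -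
  from gc have char: "of_nat p = (0::'r)" by (auto simp: gc_Kn_alg_def)
  have p1: "p > 1" using p prime_gt_1_nat by blast
  obtain F1 F2 where f12: "f = (F1, F2)" by (cases f) simp
  have el1: "A1_elem (p^n) F1" and el2: "A1_elem (p^n) F2"
    and hg1: "A1_homog G 1 F1" and hg2: "A1_homog G 2 F2"
    and z1: "fst F1 0 = 0" and z2: "fst F2 0 = 0"
    and ad1: "A1_additive (p^n) F1" and ad2: "A1_additive (p^n) F2"
    and cg1: "\<exists>a0 \<in> G 1. A1_cong_x2 F1 ((\<lambda>k. if k = 1 then a0 else 0), (\<lambda>k. if k = 0 then 1 else 0))"
    and cg2: "A1_cong_x2 F2 ((\<lambda>k. if k = 1 then 1 else 0), (\<lambda>k. 0))"
    using f f12 by (auto simp: AutGa_def)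
  define \<theta> where "\<theta> = ((\<lambda>i. if i < n then fst F1 (p^i) else 0), (\<lambda>i. if i < n then fst F2 (p^i) else 0))"
  have F21: "fst F2 1 = 1" and F2s0: "snd F2 0 = 0" using cg2 by (auto simp: A1_cong_x2_def)
  have F1s0: "snd F1 0 = 1" using cg1 by (auto simp: A1_cong_x2_def)
  have s0: "snd \<theta> 0 = 1" using n F21 by (simp add: \<theta>_def)
  have th: "\<theta> \<in> HomB p n G"
  proof -
    have "fst F1 (p^i) \<in> G (2 * int p ^ i - 1)" for i
      using hg1 unfolding A1_homog_def by (metis of_nat_power)
    moreover have "fst F2 (p^i) \<in> G (2 * (int p ^ i - 1))" for i
    proof -
      have "fst F2 (p^i) \<in> G (2 * int (p^i) - 2)" using hg2 unfolding A1_homog_def by blast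
      thus ?thesis by (simp add: algebra_simps)
    qed
    ultimately show ?thesis using s0 unfolding HomB_def \<theta>_def by auto
  qed
  have P0: "Phi p n \<theta> = ((sp p n (fst \<theta>), \<lambda>k. if k = 0 then 1 else 0), (sp p n (snd \<theta>), \<lambda>k. 0))"
    by (rule Phi_alt[OF n s0])
  have e1: "sp p n (fst \<theta>) = fst F1"
    using additive_structure(1)[OF p char ad1 el1 z1] by (simp add: \<theta>_def)
  have e2: "sp p n (snd \<theta>) = fst F2"
    using additive_structure(1)[OF p char ad2 el2 z2] by (simp add: \<theta>_def)
  have e3: "(\<lambda>k. if k = 0 then 1 else 0) = snd F1"
  proof
    fix k show "(if k = 0 then 1 else 0) = snd F1 k"
      using additive_structure(2)[OF p char ad1 el1 z1, of k] F1s0 by (cases "k = 0") simp_all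
  qed
  have e4: "(\<lambda>k. 0) = snd F2"
  proof
    fix k show "0 = snd F2 k"
      using additive_structure(2)[OF p char ad2 el2 z2, of k] F2s0 by (cases "k = 0") simp_all
  qed
  have "Phi p n \<theta> = ((fst F1, snd F1), (fst F2, snd F2))"
    unfolding P0 e1 e2 e3 e4 ..
  hence "Phi p n \<theta> = f" using f12 by simp
  thus ?thesis using th by blast
qed

lemma hom_sum:
  fixes \<phi> :: "'a::ring_1 \<Rightarrow> 'b::ring_1" and g :: "'c \<Rightarrow> 'a"
  assumes "\<forall>a b. \<phi> (a + b) = \<phi> a + \<phi> b"
  shows "\<phi> (sum g A) = (\<Sum>x\<in>A. \<phi> (g x))"
proof -
  have z: "\<phi> 0 = (0::'b::ring_1)"
  proof -
    have "\<phi> (0 + 0) = \<phi> 0 + \<phi> 0" using assms by blast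
    thus ?thesis by simp
  qed
  show ?thesis
    by (induct A rule: infinite_finite_induct) (simp_all add: z assms)
qed

lemma naturality:
  assumes hom: "Kn_alg_hom G v G' v' \<phi>"
  shows "Phi p n (hom_map \<phi> \<theta>) = aut_map \<phi> (Phi p n \<theta>)"
proof -
  have add: "\<forall>a b. \<phi> (a + b) = \<phi> a + \<phi> b" and one: "\<phi> 1 = 1"
    using hom by (auto simp: Kn_alg_hom_def)
  have z: "\<phi> 0 = 0"
  proof -
    have "\<phi> (0 + 0) = \<phi> 0 + \<phi> 0" using add by blast
    thus ?thesis by simp
  qed
  show ?thesis
    unfolding Phi_def hom_map_def aut_map_def
    by (simp add: fun_eq_iff hom_sum[OF add] add[rule_format] z one if_distrib[of \<phi>] cong: if_cong)
qed

theorem proposition4p3: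
  fixes p n :: nat
    and G :: "int \<Rightarrow> 'r::ring_1 set" and v :: 'r
    and G' :: "int \<Rightarrow> 's::ring_1 set" and v' :: 's
  assumes "prime p" and "odd p" and "n \<ge> 1"
    and "gc_Kn_alg p n G v"
  shows "bij_betw (Phi p n) (HomB p n G) (AutGa p n G)
    \<and> (\<forall>\<theta>\<in>HomB p n G. \<forall>\<theta>'\<in>HomB p n G.
         Phi p n (conv p n \<theta> \<theta>') = aut_mult (p ^ n) (Phi p n \<theta>) (Phi p n \<theta>'))
    \<and> (gc_Kn_alg p n G' v' \<longrightarrow>
         (\<forall>\<phi>. Kn_alg_hom G v G' v' \<phi> \<longrightarrow>
            (\<forall>\<theta>\<in>HomB p n G. Phi p n (hom_map \<phi> \<theta>) = aut_map \<phi> (Phi p n \<theta>))))"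
proof -
  have inj: "inj_on (Phi p n) (HomB p n G)"
    unfolding inj_on_def using Phi_inj[OF assms(1,3)] by blast
  have img: "Phi p n ` HomB p n G = AutGa p n G"
  proof
    show "Phi p n ` HomB p n G \<subseteq> AutGa p n G"
      using Phi_in[OF assms(1,3,4)] by blast
    show "AutGa p n G \<subseteq> Phi p n ` HomB p n G"
      using Phi_surj[OF assms(1,3,4)] by blast
  qed
  have bij: "bij_betw (Phi p n) (HomB p n G) (AutGa p n G)"
    unfolding bij_betw_def using inj img by blast
  show ?thesis
    using bij part2[OF assms(1,3,4)] naturality by blast
qed

end
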